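(* Let $p\in(1,\infty]$ and let $\theta_p$ be a real number with $0<\theta_p\le 1/2$ and $3((1-\theta_p)^p+2\theta_p^p)^{1/p}+(3\theta_p^p)^{1/p}<3$ (for $p=\infty$ the latter is read as $3\max(1-\theta_\infty,\theta_\infty)+\theta_\infty<3$). Define, for $p<\infty$: $\alpha_X=3^{1/p}\theta_p$, $\alpha_P=1$, $\beta_{in}=((1-\theta_p)^p+2\theta_p^p)^{1/p}$, $\beta_{out}=(1+3\theta_p^p)^{1/p}$, $\gamma_0=6^{1/p}\theta_p$, $\gamma_1=4^{1/p}\theta_p$, $\gamma_2=2^{1/p}\theta_p$, $\tau=2^{1/p}$; and for $p=\infty$: $\alpha_X=\gamma_0=\gamma_1=\gamma_2=\theta_\infty$, $\alpha_P=\beta_{out}=\tau=1$, $\beta_{in}=1-\theta_\infty$. Then the tuple $(\alpha_X,\alpha_P,\beta_{in},\beta_{out},\gamma_0,\gamma_1,\gamma_2,\tau)$ is Steiner embeddable.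
   Context: These are the $\ell_p$-distances in the point configuration with terminals $\mathbf{0}$ and the standard basis vectors $\mathbf{e}_i$, and facilities $\theta_p(\mathbf{e}_i+\mathbf{e}_j+\mathbf{e}_k)$. A tuple $(\alpha_X,\alpha_P,\beta_{in},\beta_{out},\gamma_0,\gamma_1,\gamma_2,\tau)$ of positive reals is metric compatible if: $\alpha_X\le\min(\alpha_P+\beta_{in},\alpha_P+\beta_{out})$; $\alpha_P\le\min(\alpha_X+\beta_{in},\alpha_X+\beta_{out})$; $\beta_{in}\le\min(\alpha_X+\alpha_P,\beta_{out}+\tau,\gamma_i+\beta_{out}: i\in\{0,1,2\})$; $\beta_{out}\le\min(\alpha_X+\alpha_P,\beta_{in}+\tau,\gamma_i+\beta_{in}: i\in\{0,1,2\})$; $\gamma_i\le\min(2\alpha_X,\gamma_j+\gamma_k,2\beta_{in},2\beta_{out})$ for all $i,j,k\in\{0,1,2\}$; $\tau\le\min(2\alpha_P,2\beta_{in},2\beta_{out})$. It is Steiner embeddable if it is metric compatible and: (P1) $\alpha_X\le 3\gamma_2/2,\alpha_P,\beta_{in},\beta_{out},\gamma_0,\gamma_1,\tau$; (P2) $\alpha_P\le\beta_{out}$; (P3) $\beta_{in}+\alpha_X/3<\min(\alpha_P,\tau)$; (P4) $\min(\alpha_P,\tau)\le\beta_{in}+\gamma_2$. *)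

theory Defs
  imports "HOL-Analysis.Analysis" "HOL-Library.Extended_Real"
begin

definition metric_compatible ::
  "real \<Rightarrow> real \<Rightarrow> real \<Rightarrow> real \<Rightarrow> real \<Rightarrow> real \<Rightarrow> real \<Rightarrow> real \<Rightarrow> bool" where
  "metric_compatible aX aP bin bout g0 g1 g2 tau \<longleftrightarrow>
     (let g = (\<lambda>i::nat. if i = 0 then g0 else if i = 1 then g1 else g2) in
     aX > 0 \<and> aP > 0 \<and> bin > 0 \<and> bout > 0 \<and> g0 > 0 \<and> g1 > 0 \<and> g2 > 0 \<and> tau > 0 \<and>
     aX \<le> min (aP + bin) (aP + bout) \<and>
     aP \<le> min (aX + bin) (aX + bout) \<and>
     bin \<le> aX + aP \<and> bin \<le> bout + tau \<and> (\<forall>i\<in>{0,1,2}. bin \<le> g i + bout) \<and>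
     bout \<le> aX + aP \<and> bout \<le> bin + tau \<and> (\<forall>i\<in>{0,1,2}. bout \<le> g i + bin) \<and>
     (\<forall>i j k. {i, j, k} = {0,1,2::nat} \<longrightarrow>
        g i \<le> 2 * aX \<and> g i \<le> g j + g k \<and> g i \<le> 2 * bin \<and> g i \<le> 2 * bout) \<and>
     tau \<le> 2 * aP \<and> tau \<le> 2 * bin \<and> tau \<le> 2 * bout)"

definition steiner_embeddable ::
  "real \<Rightarrow> real \<Rightarrow> real \<Rightarrow> real \<Rightarrow> real \<Rightarrow> real \<Rightarrow> real \<Rightarrow> real \<Rightarrow> bool" where
  "steiner_embeddable aX aP bin bout g0 g1 g2 tau \<longleftrightarrow>
     metric_compatible aX aP bin bout g0 g1 g2 tau \<and>
     \<comment> \<open>P1\<close>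
     aX \<le> 3 * g2 / 2 \<and> aX \<le> aP \<and> aX \<le> bin \<and> aX \<le> bout \<and> aX \<le> g0 \<and> aX \<le> g1 \<and> aX \<le> tau \<and>
     \<comment> \<open>P2\<close>
     aP \<le> bout \<and>
     \<comment> \<open>P3\<close>
     bin + aX / 3 < min aP tau \<and>
     \<comment> \<open>P4\<close>
     min aP tau \<le> bin + g2"

end

theory Submission
  imports Defs
begin

lemma mink2:
  fixes q x y A B :: real
  assumes q: "q \<ge> 1" and xy: "x \<ge> 0" "y \<ge> 0" and AB: "A > 0" "B > 0"
  shows "(x+y) powr q \<le> (A+B) powr (q-1) * (x powr q / A powr (q-1) + y powr q / B powr (q-1))"
proof -
  have qA: "A powr q = A powr (q-1) * A" and qB: "B powr q = B powr (q-1) * B"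
    and qAB: "(A+B) powr q = (A+B) powr (q-1) * (A+B)"
    using AB powr_add[of A "q-1" 1] powr_add[of B "q-1" 1] powr_add[of "A+B" "q-1" 1] by simp_all
  have mAB: "A powr (q-1) \<le> (A+B) powr (q-1)" "B powr (q-1) \<le> (A+B) powr (q-1)"
    using AB q by (auto intro!: powr_mono2)
  show ?thesis
  proof (cases "x = 0 \<or> y = 0")
    case True
    then show ?thesis
    proof
      assume x0: "x = 0"
      have "y powr q \<le> (A+B) powr (q-1) * (y powr q / B powr (q-1))"
        using mAB AB xy by (simp add: field_simps mult_left_mono)
      then show ?thesis using x0 by simp
    next
      assume y0: "y = 0"
      have "x powr q \<le> (A+B) powr (q-1) * (x powr q / A powr (q-1))"
        using mAB AB xy by (simp add: field_simps mult_left_mono)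
      then show ?thesis using y0 by simp
    qed
  next
    case False
    then have xp: "x > 0" "y > 0" using xy by auto
    define l where "l = B / (A+B)"
    have l: "l \<ge> 0" "l \<le> 1" using AB by (auto simp: l_def)
    have l1: "1 - l = A/(A+B)" using AB by (simp add: l_def field_simps)
    have eq: "(1 - l) *\<^sub>R (x/A) + l *\<^sub>R (y/B) = (x+y)/(A+B)"
      using AB unfolding l1 by (simp add: l_def add_divide_distrib)
    have "((x+y)/(A+B)) powr q \<le> (1-l) * (x/A) powr q + l * (y/B) powr q"
      using convex_onD[OF powr_convex[OF q] l, of "x/A" "y/B"] xp AB eq by simp
    then have "(x+y) powr q / (A+B) powr q \<le> (A/(A+B)) * (x powr q / A powr q) + (B/(A+B)) * (y powr q / B powr q)"
      using AB xp l1 by (simp add: powr_divide l_def)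
    also have "\<dots> = (x powr q / A powr (q-1) + y powr q / B powr (q-1)) / (A+B)"
    proof -
      have "A/(A+B)*(X/(a*A)) + B/(A+B)*(Y/(b*B)) = (X/a+Y/b)/(A+B)" if "a>0" "b>0" for a b X Y
      proof -
        have "A/(A+B)*(X/(a*A)) = X/a/(A+B)" "B/(A+B)*(Y/(b*B)) = Y/b/(A+B)" using AB that by auto
        then show ?thesis by (simp add: add_divide_distrib)
      qed
      moreover have "A powr (q-1) > 0" "B powr (q-1) > 0" using AB by auto
      ultimately show ?thesis unfolding qA qB by (metis mult.commute)
    qed
    finally have "(x+y) powr q \<le> (x powr q / A powr (q-1) + y powr q / B powr (q-1)) / (A+B) * (A+B) powr q"
      using AB by (simp add: field_simps)
    moreover have "S/(A+B) * ((A+B) powr (q-1) * (A+B)) = (A+B) powr (q-1) * S" for S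
      using AB by simp
    ultimately show ?thesis unfolding qAB by simp
  qed
qed

lemma root_pow:
  fixes S q :: real assumes "S \<ge> 0" "q > 0"
  shows "(S powr (1/q)) powr q = S"
  using assms by (simp add: powr_powr)

lemma minkowski:
  fixes q :: real and x y :: "'i \<Rightarrow> real"
  assumes I: "finite I" and q: "q \<ge> 1" and xy: "\<And>i. x i \<ge> 0" "\<And>i. y i \<ge> 0"
  shows "(\<Sum>i\<in>I. (x i + y i) powr q) powr (1/q)
     \<le> (\<Sum>i\<in>I. x i powr q) powr (1/q) + (\<Sum>i\<in>I. y i powr q) powr (1/q)"
proof -
  define A where "A = (\<Sum>i\<in>I. x i powr q) powr (1/q)"
  define B where "B = (\<Sum>i\<in>I. y i powr q) powr (1/q)"
  have SA: "(\<Sum>i\<in>I. x i powr q) \<ge> 0" "(\<Sum>i\<in>I. y i powr q) \<ge> 0"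
    by (auto intro: sum_nonneg)
  show ?thesis
  proof (cases "A = 0 \<or> B = 0")
    case True
    then show ?thesis
    proof
      assume "A = 0"
      then have "(\<Sum>i\<in>I. x i powr q) = 0" using SA by (simp add: A_def)
      then have "\<forall>i\<in>I. x i powr q = 0" using I by (subst (asm) sum_nonneg_eq_0_iff) auto
      then have "\<forall>i\<in>I. x i = 0" by simp
      then show ?thesis by (simp add: A_def B_def \<open>A = 0\<close>[unfolded A_def])
    next
      assume "B = 0"
      then have "(\<Sum>i\<in>I. y i powr q) = 0" using SA by (simp add: B_def)
      then have "\<forall>i\<in>I. y i powr q = 0" using I by (subst (asm) sum_nonneg_eq_0_iff) auto
      then have "\<forall>i\<in>I. y i = 0" by simp
      then show ?thesis by (simp add: A_def B_def \<open>B = 0\<close>[unfolded B_def])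
    qed
  next
    case False
    then have AB: "A > 0" "B > 0" by (auto simp: A_def B_def)
    have qA: "A powr q = A powr (q-1) * A" and qB: "B powr q = B powr (q-1) * B"
      and qAB: "(A+B) powr q = (A+B) powr (q-1) * (A+B)"
      using AB powr_add[of A "q-1" 1] powr_add[of B "q-1" 1] powr_add[of "A+B" "q-1" 1] by simp_all
    have "(\<Sum>i\<in>I. (x i + y i) powr q) \<le> (\<Sum>i\<in>I. (A+B) powr (q-1) * (x i powr q / A powr (q-1) + y i powr q / B powr (q-1)))"
      by (rule sum_mono, rule mink2) (use q xy AB in auto)
    also have "\<dots> = (A+B) powr (q-1) * ((\<Sum>i\<in>I. x i powr q) / A powr (q-1) + (\<Sum>i\<in>I. y i powr q) / B powr (q-1))"
      by (simp add: sum_distrib_left sum_divide_distrib[symmetric] sum.distrib distrib_left)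
    also have "(\<Sum>i\<in>I. x i powr q) = A powr q" using SA q by (simp add: A_def root_pow)
    also have "(\<Sum>i\<in>I. y i powr q) = B powr q" using SA q by (simp add: B_def root_pow)
    also have "A powr q / A powr (q-1) + B powr q / B powr (q-1) = A + B"
      using AB by (simp add: qA qB)
    also have "(A+B) powr (q-1) * (A+B) = (A+B) powr q" by (simp add: qAB)
    finally have "(\<Sum>i\<in>I. (x i + y i) powr q) \<le> (A+B) powr q" .
    then have "(\<Sum>i\<in>I. (x i + y i) powr q) powr (1/q) \<le> ((A+B) powr q) powr (1/q)"
      using q by (intro powr_mono2) (auto intro: sum_nonneg)
    also have "\<dots> = A + B" using AB q by (simp add: powr_powr)
    finally show ?thesis by (simp add: A_def B_def)
  qed
qed

lemma suff:
  fixes aX aP bin bout g0 g1 g2 tau :: real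
  assumes pos: "aX > 0" "aP > 0" "bin > 0" "bout > 0" "g0 > 0" "g1 > 0" "g2 > 0" "tau > 0"
  and m: "aX \<le> aP+bin" "aX \<le> aP+bout" "aP \<le> aX+bin" "aP \<le> aX+bout" "bin \<le> aX+aP"
    "bin \<le> bout+tau" "bin \<le> bout" "bout \<le> aX+aP" "bout \<le> bin+tau" "bout \<le> g2+bin"
    "g2 \<le> g1" "g1 \<le> g0" "g0 \<le> g1+g2" "g0 \<le> 2*aX" "g0 \<le> 2*bin" "g0 \<le> 2*bout"
    "tau \<le> 2*aP" "tau \<le> 2*bin" "tau \<le> 2*bout"
  and P1: "aX \<le> 3 * g2 / 2" "aX \<le> aP" "aX \<le> bin" "aX \<le> bout" "aX \<le> g0" "aX \<le> g1" "aX \<le> tau"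
  and P2: "aP \<le> bout" and P3: "bin + aX / 3 < min aP tau" and P4: "min aP tau \<le> bin + g2"
  shows "steiner_embeddable aX aP bin bout g0 g1 g2 tau"
proof -
  have trip: "(j = 0 \<or> k = 0) \<or> (j = 1 \<and> k = 2) \<or> (j = 2 \<and> k = 1)"
    "i = 0 \<or> i = 1 \<or> i = 2"
    if "{i, j, k} = {0,1,2::nat}" for i j k
  proof -
    have a: "i \<in> {0,1,2}" "j \<in> {0,1,2}" "k \<in> {0,1,2}" using that by blast+
    have b: "0 \<in> {i,j,k}" "1 \<in> {i,j,k}" "2 \<in> {i,j,k}" using that by blast+
    show "(j = 0 \<or> k = 0) \<or> (j = 1 \<and> k = 2) \<or> (j = 2 \<and> k = 1)" "i = 0 \<or> i = 1 \<or> i = 2"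
      using a b by auto
  qed
  let ?g = "(\<lambda>i::nat. if i = 0 then g0 else if i = 1 then g1 else g2)"
  have G: "\<forall>i j k. {i, j, k} = {0,1,2::nat} \<longrightarrow>
        ?g i \<le> 2 * aX \<and> ?g i \<le> ?g j + ?g k \<and> ?g i \<le> 2 * bin \<and> ?g i \<le> 2 * bout"
  proof (intro allI impI)
    fix i j k :: nat assume h: "{i, j, k} = {0,1,2::nat}"
    have gi: "?g i \<le> g0" using trip(2)[OF h] m by auto
    have "g0 \<le> ?g j + ?g k" using trip(1)[OF h] m pos by auto
    then show "?g i \<le> 2 * aX \<and> ?g i \<le> ?g j + ?g k \<and> ?g i \<le> 2 * bin \<and> ?g i \<le> 2 * bout"
      using gi m by linarith
  qed
  have H: "\<forall>i\<in>{0,1,2::nat}. bin \<le> ?g i + bout" "\<forall>i\<in>{0,1,2::nat}. bout \<le> ?g i + bin"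
    using m pos by (simp_all add: add_increasing add_increasing2 less_imp_le)
  show ?thesis
    unfolding steiner_embeddable_def metric_compatible_def Let_def
    apply (intro conjI)
    apply (fact G H pos P1 P2 P3 P4 | simp add: m P3 pos)+
    done
qed
theorem proposition5p2:
  fixes p :: ereal and \<theta> :: real
    and aX aP bin bout g0 g1 g2 tau :: real
  assumes hp: "1 < p"
    and h\<theta>: "0 < \<theta>" "\<theta> \<le> 1/2"
    and hfin: "p \<noteq> \<infinity> \<Longrightarrow>
      3 * ((1 - \<theta>) powr real_of_ereal p + 2 * \<theta> powr real_of_ereal p) powr (1 / real_of_ereal p)
        + (3 * \<theta> powr real_of_ereal p) powr (1 / real_of_ereal p) < 3"
    and hinf: "p = \<infinity> \<Longrightarrow> 3 * max (1 - \<theta>) \<theta> + \<theta> < 3"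
    and defs_fin: "p \<noteq> \<infinity> \<Longrightarrow>
      aX = 3 powr (1 / real_of_ereal p) * \<theta> \<and> aP = 1 \<and>
      bin = ((1 - \<theta>) powr real_of_ereal p + 2 * \<theta> powr real_of_ereal p) powr (1 / real_of_ereal p) \<and>
      bout = (1 + 3 * \<theta> powr real_of_ereal p) powr (1 / real_of_ereal p) \<and>
      g0 = 6 powr (1 / real_of_ereal p) * \<theta> \<and> g1 = 4 powr (1 / real_of_ereal p) * \<theta> \<and>
      g2 = 2 powr (1 / real_of_ereal p) * \<theta> \<and> tau = 2 powr (1 / real_of_ereal p)"
    and defs_inf: "p = \<infinity> \<Longrightarrow>
      aX = \<theta> \<and> g0 = \<theta> \<and> g1 = \<theta> \<and> g2 = \<theta> \<and> aP = 1 \<and> bout = 1 \<and> tau = 1 \<and> bin = 1 - \<theta>"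
  shows "steiner_embeddable aX aP bin bout g0 g1 g2 tau"
  proof (cases "p = \<infinity>")
  case True
  note d = defs_inf[OF True]
  show ?thesis by (rule suff) (use d h\<theta> in \<open>simp_all\<close>)
next
  case False
  note d = defs_fin[OF False]
  note hf = hfin[OF False]
  obtain q where pq: "p = ereal q" using False hp by (cases p) auto
  have q1: "q > 1" using hp pq by simp
  have rp: "real_of_ereal p = q" using pq by simp
  define r where "r = 1/q"
  have r: "r > 0" "r < 1" using q1 by (auto simp: r_def)
  define t where "t = \<theta>"
  have t: "0 < t" "t \<le> 1/2" using h\<theta> by (auto simp: t_def)
  define T where "T = t powr q"
  define D where "D = (1-t) powr q"
  have T: "T > 0" using t by (simp add: T_def)
  have TD: "T \<le> D" unfolding T_def D_def using t q1 by (intro powr_mono2) auto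
  have D1: "D \<le> 1" unfolding D_def using t q1 by (intro powr_le1) auto
  have rt: "(c * T) powr r = c powr r * t" if "c \<ge> 0" for c
    using that t q1 by (simp add: T_def r_def powr_mult powr_powr)
  have aX: "aX = (3*T) powr r" using d rt[of 3] by (simp add: rp r_def t_def)
  have g0: "g0 = (6*T) powr r" using d rt[of 6] by (simp add: rp r_def t_def)
  have g1: "g1 = (4*T) powr r" using d rt[of 4] by (simp add: rp r_def t_def)
  have g2: "g2 = (2*T) powr r" using d rt[of 2] by (simp add: rp r_def t_def)
  have tau: "tau = 2 powr r" and aP: "aP = 1" using d by (simp_all add: rp r_def)
  have bin: "bin = (D + 2*T) powr r" using d by (simp add: rp r_def t_def D_def T_def)
  have bout: "bout = (1 + 3*T) powr r" using d by (simp add: rp r_def t_def D_def T_def)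
  have hf': "3 * bin + aX < 3" using hf bin aX by (simp add: rp r_def t_def D_def T_def)
  have mono: "S1 powr r \<le> S2 powr r" if "0 \<le> S1" "S1 \<le> S2" for S1 S2
    using that r by (intro powr_mono2) auto
  have Dr: "D powr r = 1 - t" using t q1 by (simp add: D_def r_def powr_powr)
  have k2: "aX \<le> bin" unfolding aX bin using TD T by (intro mono) auto
  have aX3: "aX < 3/4" using k2 hf' by linarith
  have k5: "1 - t \<le> bin" unfolding bin Dr[symmetric] using T TD by (intro mono) auto
  have tg2: "t \<le> g2" unfolding g2 rt[of 2, simplified] using t r
    by (simp add: ge_one_powr_ge_zero)
  have g21: "g2 \<le> g1" "g1 \<le> g0" "g2 \<le> aX" "aX \<le> g1" unfolding g0 g1 g2 aX using T by (auto intro!: mono)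
  have bb: "bin \<le> bout" unfolding bin bout using T D1 TD by (intro mono) auto
  have bout1: "1 \<le> bout" unfolding bout using T mono[of 1 "1+3*T"] by simp
  have tau1: "1 < tau" unfolding tau using r by simp
  have tau2: "tau \<le> 2" unfolding tau using r powr_le_cancel_iff[of 2 r 1] by simp
  have pos: "aX > 0" "bin > 0" "g0 > 0" "g1 > 0" "g2 > 0" "tau > 0" "bout > 0"
    unfolding aX bin g0 g1 g2 tau bout using T TD by auto
  have aXq: "aX powr q = 3 * T" using T q1 by (simp add: aX r_def powr_powr)
  have g1q: "g1 powr q = 4 * T" using T q1 by (simp add: g1 r_def powr_powr)
  have g2q: "g2 powr q = 2 * T" using T q1 by (simp add: g2 r_def powr_powr)
  have k7: "bout \<le> 1 + aX"
  proof -
    have "(\<Sum>i\<in>{0,1::nat}. ((if i = 0 then 1 else 0) + (if i = 0 then 0 else aX)) powr q) powr (1/q)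
      \<le> (\<Sum>i\<in>{0,1::nat}. (if i = 0 then 1 else 0) powr q) powr (1/q)
        + (\<Sum>i\<in>{0,1::nat}. (if i = 0 then 0 else aX) powr q) powr (1/q)"
      using q1 pos by (intro minkowski) auto
    then have "(1 + aX powr q) powr (1/q) \<le> 1 + (aX powr q) powr (1/q)" by simp
    moreover have "(aX powr q) powr (1/q) = aX" using q1 pos by (simp add: powr_powr)
    ultimately show ?thesis by (simp add: aXq bout r_def)
  qed
  have k9: "g0 \<le> g1 + g2"
  proof -
    have "(\<Sum>i\<in>{0,1::nat}. ((if i = 0 then g1 else 0) + (if i = 0 then 0 else g2)) powr q) powr (1/q)
      \<le> (\<Sum>i\<in>{0,1::nat}. (if i = 0 then g1 else 0) powr q) powr (1/q)
        + (\<Sum>i\<in>{0,1::nat}. (if i = 0 then 0 else g2) powr q) powr (1/q)"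
      using q1 pos by (intro minkowski) auto
    then have "(g1 powr q + g2 powr q) powr (1/q) \<le> (g1 powr q) powr (1/q) + (g2 powr q) powr (1/q)" by simp
    moreover have "(g1 powr q) powr (1/q) = g1" "(g2 powr q) powr (1/q) = g2" using q1 pos by (simp_all add: powr_powr)
    ultimately show ?thesis by (simp add: g1q g2q g0 r_def)
  qed
  have k8: "bout \<le> g2 + bin"
  proof -
    let ?x = "\<lambda>i::nat. if i = 0 then 1 - t else if i = 3 then 0 else t"
    let ?y = "\<lambda>i::nat. if i = 0 then t else if i = 3 then t else 0"
    have "(\<Sum>i\<in>{0,1,2,3::nat}. (?x i + ?y i) powr q) powr (1/q)
      \<le> (\<Sum>i\<in>{0,1,2,3::nat}. ?x i powr q) powr (1/q)
        + (\<Sum>i\<in>{0,1,2,3::nat}. ?y i powr q) powr (1/q)"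
      using q1 t by (intro minkowski) auto
    then show ?thesis using q1 t
      by (simp add: bout bin g2 r_def D_def T_def algebra_simps)
  qed
  have k10: "tau \<le> 2 * bin"
  proof -
    have "(1 - t + t) powr q \<le> (1+1) powr (q-1) * ((1-t) powr q / 1 powr (q-1) + t powr q / 1 powr (q-1))"
      using q1 t by (intro mink2) auto
    then have h1: "1 \<le> 2 powr (q-1) * (D + T)" by (simp add: D_def T_def)
    have "2 powr q = 2 powr (q-1) * 2" using powr_add[of 2 "q-1" 1] by simp
    then have e: "2 powr q * (D + T) = 2 * (2 powr (q-1) * (D + T))" by simp
    have "2 powr q * (D + T) \<le> 2 powr q * (D + 2*T)" using T by (intro mult_left_mono) auto
    then have "2 \<le> 2 powr q * (D + 2*T)" using h1 e by linarith
    then have "2 powr r \<le> (2 powr q * (D + 2*T)) powr r" using T TD by (intro mono) auto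
    also have "\<dots> = 2 * bin" using q1 by (simp add: powr_mult bin r_def powr_powr)
    finally show ?thesis by (simp add: tau)
  qed
  have k11: "bout \<le> tau"
  proof -
    have "aX powr q \<le> 1" using aX3 pos q1 by (intro powr_le1) auto
    then show ?thesis unfolding bout tau using T aXq by (intro mono) auto
  qed
  have k12: "aX \<le> 3 * g2 / 2"
  proof -
    have "(3/2) powr r \<le> (3/2::real) powr 1" using r by (subst powr_le_cancel_iff) auto
    then have "(3/2) powr r * (2 powr r * t) \<le> 3/2 * (2 powr r * t)" using t by (intro mult_right_mono) auto
    moreover have "(3/2::real) powr r * 2 powr r = 3 powr r" by (simp add: powr_mult[symmetric])
    ultimately show ?thesis unfolding aX g2 rt[of 3, simplified] rt[of 2, simplified]
      by (simp add: mult.assoc[symmetric])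
  qed
  have k13: "g0 \<le> 2 * aX"
  proof -
    have "2 powr r \<le> (2::real) powr 1" using r by (subst powr_le_cancel_iff) auto
    then have "2 powr r * (3 powr r * t) \<le> 2 * (3 powr r * t)" using t by (intro mult_right_mono) auto
    moreover have "(2::real) powr r * 3 powr r = 6 powr r" by (simp add: powr_mult[symmetric])
    ultimately show ?thesis unfolding aX g0 rt[of 3, simplified] rt[of 6, simplified]
      by (simp add: mult.assoc[symmetric])
  qed
  show ?thesis
    apply (rule suff)
    using pos aP k2 aX3 k5 tg2 g21 bb bout1 tau1 tau2 k7 k8 k9 k10 k11 k12 k13 hf'
    by (simp_all add: min_def)
qed

end
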